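(* Let $m\ge 2$ and let $\langle a,b\mid (ab)^m=(ba)^m\rangle$ be the dihedral Artin group with label $2m$, and let $z_{ab}=(ab)^m$. If $x\in\langle a,z_{ab}\rangle$ is a primitive element of $\langle a,z_{ab}\rangle\cong\mathbb{Z}^2$ admitting an $n$-th root $w\in\langle a,b\rangle$ (i.e. $w^n=x$), then $n\le m$.
   Context: $z_{ab}=(ab)^m$ generates the centre of this dihedral Artin group, and $\langle a,z_{ab}\rangle$ is free abelian of rank 2. An element of a free abelian group is primitive if it is not a proper power of another element of that group. *)

theory Defs
  imports "HOL-Algebra.Algebra"
begin

text \<open>Words over the generators a, b and their formal inverses.
  A letter (g, True) denotes the inverse of generator g.\<close>

datatype gen = GA | GB

type_synonym letter = "gen \<times> bool"

definition ab_word :: "nat \<Rightarrow> letter list" where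
  "ab_word m = concat (replicate m [(GA, False), (GB, False)])"

definition ba_word :: "nat \<Rightarrow> letter list" where
  "ba_word m = concat (replicate m [(GB, False), (GA, False)])"

inductive artin_rel :: "nat \<Rightarrow> letter list \<Rightarrow> letter list \<Rightarrow> bool" for m where
  refl: "artin_rel m w w"
| sym: "artin_rel m u v \<Longrightarrow> artin_rel m v u"
| trans: "artin_rel m u v \<Longrightarrow> artin_rel m v w \<Longrightarrow> artin_rel m u w"
| cancel: "artin_rel m (u @ [(g, e), (g, \<not> e)] @ v) (u @ v)"
| relator: "artin_rel m (u @ ab_word m @ v) (u @ ba_word m @ v)"

definition artin_class :: "nat \<Rightarrow> letter list \<Rightarrow> letter list set" where
  "artin_class m w = {v. artin_rel m w v}"

definition artin_mult :: "nat \<Rightarrow> letter list set \<Rightarrow> letter list set \<Rightarrow> letter list set" where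
  "artin_mult m P Q = {w. \<exists>u\<in>P. \<exists>v\<in>Q. artin_rel m (u @ v) w}"

definition artin_group :: "nat \<Rightarrow> letter list set monoid" where
  "artin_group m = \<lparr> carrier = range (artin_class m),
     monoid.mult = artin_mult m,
     one = artin_class m [] \<rparr>"

definition gen_a :: "nat \<Rightarrow> letter list set" where
  "gen_a m = artin_class m [(GA, False)]"

definition gen_b :: "nat \<Rightarrow> letter list set" where
  "gen_b m = artin_class m [(GB, False)]"

definition z_ab :: "nat \<Rightarrow> letter list set" where
  "z_ab m = (gen_a m \<otimes>\<^bsub>artin_group m\<^esub> gen_b m) [^]\<^bsub>artin_group m\<^esub> m"

definition primitive_in :: "('a, 'b) monoid_scheme \<Rightarrow> 'a set \<Rightarrow> 'a \<Rightarrow> bool" where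
  "primitive_in G H x \<longleftrightarrow> x \<in> H \<and> \<not> (\<exists>y\<in>H. \<exists>k::nat. k \<ge> 2 \<and> x = y [^]\<^bsub>G\<^esub> k)"

end

theory Submission
  imports Defs
begin


lemma rel_ctx: "artin_rel m u v \<Longrightarrow> artin_rel m (p @ u @ q) (p @ v @ q)"
proof (induction rule: artin_rel.induct)
  case (refl w) then show ?case by (rule artin_rel.refl)
next
  case (sym u v) show ?case by (rule artin_rel.sym[OF sym.IH])
next
  case (trans u v w) show ?case by (rule artin_rel.trans[OF trans.IH(1) trans.IH(2)])
next
  case (cancel u g e v)
  have "artin_rel m ((p @ u) @ [(g, e), (g, \<not> e)] @ (v @ q)) ((p @ u) @ (v @ q))"
    by (rule artin_rel.cancel)
  then show ?case by simp
next
  case (relator u v)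
  have "artin_rel m ((p @ u) @ ab_word m @ (v @ q)) ((p @ u) @ ba_word m @ (v @ q))"
    by (rule artin_rel.relator)
  then show ?case by simp
qed

lemma rel_app: "artin_rel m u u' \<Longrightarrow> artin_rel m v v' \<Longrightarrow> artin_rel m (u @ v) (u' @ v')"
proof -
  assume a: "artin_rel m u u'" and b: "artin_rel m v v'"
  have 1: "artin_rel m ([] @ u @ v) ([] @ u' @ v)" by (rule rel_ctx[OF a])
  have 2: "artin_rel m (u' @ v @ []) (u' @ v' @ [])" by (rule rel_ctx[OF b])
  show ?thesis using artin_rel.trans[OF 1[simplified] 2[simplified]] .
qed

lemma class_eq: "artin_class m u = artin_class m v \<longleftrightarrow> artin_rel m u v"
proof
  assume "artin_class m u = artin_class m v"
  moreover have "v \<in> artin_class m v" by (simp add: artin_class_def artin_rel.refl)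
  ultimately have "v \<in> artin_class m u" by simp
  then show "artin_rel m u v" by (simp add: artin_class_def)
next
  assume h: "artin_rel m u v"
  show "artin_class m u = artin_class m v"
    unfolding artin_class_def
  proof (intro Collect_cong iffI)
    fix w assume "artin_rel m u w" then show "artin_rel m v w"
      using artin_rel.trans[OF artin_rel.sym[OF h]] by blast
  next
    fix w assume "artin_rel m v w" then show "artin_rel m u w"
      using artin_rel.trans[OF h] by blast
  qed
qed

lemma class_mult: "artin_mult m (artin_class m u) (artin_class m v) = artin_class m (u @ v)"
proof
  show "artin_mult m (artin_class m u) (artin_class m v) \<subseteq> artin_class m (u @ v)"
  proof
    fix w assume "w \<in> artin_mult m (artin_class m u) (artin_class m v)"
    then obtain u' v' where "artin_rel m u u'" "artin_rel m v v'" "artin_rel m (u' @ v') w"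
      unfolding artin_mult_def artin_class_def by blast
    then show "w \<in> artin_class m (u @ v)"
      unfolding artin_class_def using artin_rel.trans[OF rel_app] by blast
  qed
next
  show "artin_class m (u @ v) \<subseteq> artin_mult m (artin_class m u) (artin_class m v)"
    unfolding artin_mult_def artin_class_def using artin_rel.refl by blast
qed

definition inv_word :: "letter list \<Rightarrow> letter list" where
  "inv_word w = rev (map (\<lambda>(g, e). (g, \<not> e)) w)"

lemma inv_word_inv: "inv_word (inv_word w) = w"
  unfolding inv_word_def by (induction w) auto

lemma rel_inv_r: "artin_rel m (w @ inv_word w) []"
proof (induction w)
  case Nil then show ?case by (simp add: inv_word_def artin_rel.refl)
next
  case (Cons x w)
  obtain g e where x: "x = (g, e)" by (cases x)
  have eq: "(x # w) @ inv_word (x # w) = [x] @ (w @ inv_word w) @ [(g, \<not> e)]"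
    by (simp add: inv_word_def x)
  have r1: "artin_rel m ([x] @ (w @ inv_word w) @ [(g, \<not> e)]) ([x] @ [] @ [(g, \<not> e)])"
    by (rule rel_ctx[OF Cons.IH])
  have "artin_rel m ((x # w) @ inv_word (x # w)) [(g, e), (g, \<not> e)]"
    using r1 unfolding eq by (simp add: x)
  moreover have "artin_rel m ([] @ [(g, e), (g, \<not> e)] @ []) ([] @ [])"
    by (rule artin_rel.cancel)
  then have "artin_rel m [(g, e), (g, \<not> e)] []" by simp
  ultimately show ?case by (rule artin_rel.trans)
qed

lemma rel_inv_l: "artin_rel m (inv_word w @ w) []"
  using rel_inv_r[of m "inv_word w"] by (simp add: inv_word_inv)

lemma artin_group_group: "group (artin_group m)"
proof (rule groupI)
  fix x y assume "x \<in> carrier (artin_group m)" "y \<in> carrier (artin_group m)"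
  then show "x \<otimes>\<^bsub>artin_group m\<^esub> y \<in> carrier (artin_group m)"
    by (auto simp: artin_group_def class_mult)
next
  show "\<one>\<^bsub>artin_group m\<^esub> \<in> carrier (artin_group m)" by (simp add: artin_group_def)
next
  fix x y z assume "x \<in> carrier (artin_group m)" "y \<in> carrier (artin_group m)" "z \<in> carrier (artin_group m)"
  then show "x \<otimes>\<^bsub>artin_group m\<^esub> y \<otimes>\<^bsub>artin_group m\<^esub> z =
        x \<otimes>\<^bsub>artin_group m\<^esub> (y \<otimes>\<^bsub>artin_group m\<^esub> z)"
    by (auto simp: artin_group_def class_mult)
next
  fix x assume "x \<in> carrier (artin_group m)"
  then show "\<one>\<^bsub>artin_group m\<^esub> \<otimes>\<^bsub>artin_group m\<^esub> x = x"
    by (auto simp: artin_group_def class_mult)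
next
  fix x assume "x \<in> carrier (artin_group m)"
  then obtain u where u: "x = artin_class m u" by (auto simp: artin_group_def)
  show "\<exists>y\<in>carrier (artin_group m). y \<otimes>\<^bsub>artin_group m\<^esub> x = \<one>\<^bsub>artin_group m\<^esub>"
    by (rule bexI[of _ "artin_class m (inv_word u)"])
       (auto simp: artin_group_def class_mult u class_eq rel_inv_l)
qed


definition cnt :: "(letter \<Rightarrow> int) \<Rightarrow> letter list \<Rightarrow> int" where
  "cnt f w = sum_list (map f w)"

definition good :: "nat \<Rightarrow> (letter \<Rightarrow> int) \<Rightarrow> bool" where
  "good m f \<longleftrightarrow> (\<forall>g e. f (g, \<not> e) = - f (g, e)) \<and> cnt f (ab_word m) = cnt f (ba_word m)"

lemma cnt_append[simp]: "cnt f (u @ v) = cnt f u + cnt f v"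
  by (simp add: cnt_def)

lemma cnt_rel: "artin_rel m u v \<Longrightarrow> good m f \<Longrightarrow> cnt f u = cnt f v"
  by (induction rule: artin_rel.induct) (auto simp: good_def cnt_def)

definition hom_cnt :: "(letter \<Rightarrow> int) \<Rightarrow> letter list set \<Rightarrow> int" where
  "hom_cnt f P = cnt f (SOME u. u \<in> P)"

lemma hom_cnt_class: "good m f \<Longrightarrow> hom_cnt f (artin_class m u) = cnt f u"
proof -
  assume g: "good m f"
  have "u \<in> artin_class m u" by (simp add: artin_class_def artin_rel.refl)
  then have "(SOME v. v \<in> artin_class m u) \<in> artin_class m u" by (rule someI)
  then have "artin_rel m u (SOME v. v \<in> artin_class m u)" by (simp add: artin_class_def)
  then show ?thesis unfolding hom_cnt_def using cnt_rel g by metis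
qed

lemma mult_class: "artin_class m u \<otimes>\<^bsub>artin_group m\<^esub> artin_class m v = artin_class m (u @ v)"
  by (simp add: artin_group_def class_mult)

lemma hom_cnt_mult:
  assumes g: "good m f" and P: "P \<in> carrier (artin_group m)" and Q: "Q \<in> carrier (artin_group m)"
  shows "hom_cnt f (P \<otimes>\<^bsub>artin_group m\<^esub> Q) = hom_cnt f P + hom_cnt f Q"
proof -
  obtain u v where "P = artin_class m u" "Q = artin_class m v" using P Q by (auto simp: artin_group_def)
  then show ?thesis by (simp add: mult_class hom_cnt_class[OF g])
qed

lemma hom_cnt_one: "good m f \<Longrightarrow> hom_cnt f \<one>\<^bsub>artin_group m\<^esub> = 0"
  by (simp add: artin_group_def hom_cnt_class cnt_def)

lemma hom_cnt_inv:
  assumes g: "good m f" and P: "P \<in> carrier (artin_group m)"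
  shows "hom_cnt f (inv\<^bsub>artin_group m\<^esub> P) = - hom_cnt f P"
proof -
  interpret G: group "artin_group m" by (rule artin_group_group)
  have "P \<otimes>\<^bsub>artin_group m\<^esub> inv\<^bsub>artin_group m\<^esub> P = \<one>\<^bsub>artin_group m\<^esub>"
    using P by (rule G.r_inv)
  then have "hom_cnt f (P \<otimes>\<^bsub>artin_group m\<^esub> inv\<^bsub>artin_group m\<^esub> P) = 0"
    by (simp only: hom_cnt_one[OF g])
  then show ?thesis using hom_cnt_mult[OF g P G.inv_closed[OF P]] by simp
qed

lemma hom_cnt_pow:
  assumes g: "good m f" and P: "P \<in> carrier (artin_group m)"
  shows "hom_cnt f (P [^]\<^bsub>artin_group m\<^esub> (n::nat)) = int n * hom_cnt f P"
proof (induction n)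
  case 0 then show ?case by (simp add: hom_cnt_one[OF g])
next
  case (Suc n)
  interpret G: group "artin_group m" by (rule artin_group_group)
  have "hom_cnt f (P [^]\<^bsub>artin_group m\<^esub> Suc n) =
      hom_cnt f (P [^]\<^bsub>artin_group m\<^esub> n \<otimes>\<^bsub>artin_group m\<^esub> P)"
    by (simp only: G.nat_pow_Suc)
  also have "... = hom_cnt f (P [^]\<^bsub>artin_group m\<^esub> n) + hom_cnt f P"
    by (rule hom_cnt_mult[OF g G.nat_pow_closed[OF P] P])
  finally show ?case using Suc by (simp add: algebra_simps)
qed

lemma hom_cnt_ipow:
  assumes g: "good m f" and P: "P \<in> carrier (artin_group m)"
  shows "hom_cnt f (P [^]\<^bsub>artin_group m\<^esub> (k::int)) = k * hom_cnt f P"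
proof -
  interpret G: group "artin_group m" by (rule artin_group_group)
  show ?thesis
  proof (cases "k < 0")
    case True
    have "hom_cnt f (P [^]\<^bsub>artin_group m\<^esub> k) =
       hom_cnt f (inv\<^bsub>artin_group m\<^esub> (P [^]\<^bsub>artin_group m\<^esub> nat (- k)))"
      using True by (simp only: int_pow_def2 if_True)
    also have "... = - (int (nat (- k)) * hom_cnt f P)"
      by (simp only: hom_cnt_inv[OF g G.nat_pow_closed[OF P]] hom_cnt_pow[OF g P])
    finally show ?thesis using True by simp
  next
    case False
    have "hom_cnt f (P [^]\<^bsub>artin_group m\<^esub> k) =
       hom_cnt f (P [^]\<^bsub>artin_group m\<^esub> nat k)"
      using False by (simp only: int_pow_def2 if_False)
    also have "... = int (nat k) * hom_cnt f P"
      by (simp only: hom_cnt_pow[OF g P])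
    finally show ?thesis using False by simp
  qed
qed

lemma class_pow: "artin_class m u [^]\<^bsub>artin_group m\<^esub> (n::nat) = artin_class m (concat (replicate n u))"
proof (induction n)
  case 0 then show ?case by (simp add: artin_group_def)
next
  case (Suc n)
  have "concat (replicate n u) @ u = concat (replicate (Suc n) u)"
    by (induction n) auto
  then show ?case using Suc by (simp add: mult_class)
qed

lemma z_ab_class: "z_ab m = artin_class m (ab_word m)"
  by (simp add: z_ab_def gen_a_def gen_b_def mult_class class_pow ab_word_def)

lemma word_comm: "(GA, False) # ba_word m = ab_word m @ [(GA, False)]"
  by (induction m) (auto simp: ab_word_def ba_word_def)

lemma a_z_comm: "gen_a m \<otimes>\<^bsub>artin_group m\<^esub> z_ab m = z_ab m \<otimes>\<^bsub>artin_group m\<^esub> gen_a m"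
proof -
  have "artin_rel m ([(GA, False)] @ ab_word m @ []) ([(GA, False)] @ ba_word m @ [])"
    by (rule artin_rel.relator)
  then show ?thesis
    by (simp add: z_ab_class gen_a_def mult_class class_eq word_comm)
qed

definition fA :: "letter \<Rightarrow> int" where
  "fA l = (if fst l = GA then (if snd l then -1 else 1) else 0)"
definition fB :: "letter \<Rightarrow> int" where
  "fB l = (if fst l = GB then (if snd l then -1 else 1) else 0)"

lemma cnt_rep: "cnt f (concat (replicate n xs)) = int n * cnt f xs"
  by (induction n) (auto simp: algebra_simps cnt_def)

lemma cnt_ab: "cnt fA (ab_word m) = int m" "cnt fB (ab_word m) = int m"
  "cnt fA (ba_word m) = int m" "cnt fB (ba_word m) = int m"
  by (simp_all add: ab_word_def ba_word_def cnt_rep) (simp_all add: cnt_def fA_def fB_def)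

lemma good_fA: "good m fA" and good_fB: "good m fB"
  by (auto simp: good_def cnt_ab fA_def fB_def)


lemma (in group) comm_ipow1:
  assumes "x \<otimes> y = y \<otimes> x" "x \<in> carrier G" "y \<in> carrier G"
  shows "x [^] (i::int) \<otimes> y = y \<otimes> x [^] i"
proof -
  have n: "x [^] (n::nat) \<otimes> y = y \<otimes> x [^] n" for n
    by (rule group_commutes_pow[OF assms])
  show ?thesis
  proof (cases "i < 0")
    case True
    let ?p = "x [^] nat (- i)"
    have p: "?p \<in> carrier G" using assms by simp
    have py: "?p \<otimes> y = y \<otimes> ?p" by (rule n)
    have ip: "inv ?p \<in> carrier G" using p by simp
    have "inv ?p \<otimes> y = inv ?p \<otimes> (y \<otimes> (?p \<otimes> inv ?p))"
      using p assms(3) by (simp only: r_inv r_one)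
    also have "... = inv ?p \<otimes> ((y \<otimes> ?p) \<otimes> inv ?p)"
      using p ip assms(3) by (simp only: m_assoc)
    also have "... = inv ?p \<otimes> ((?p \<otimes> y) \<otimes> inv ?p)"
      by (simp only: py)
    also have "... = (inv ?p \<otimes> ?p) \<otimes> (y \<otimes> inv ?p)"
      using p ip assms(3) by (simp only: m_assoc m_closed)
    also have "... = y \<otimes> inv ?p"
      using p ip assms(3) by (simp only: l_inv l_one m_closed)
    finally have c: "inv ?p \<otimes> y = y \<otimes> inv ?p" .
    have xi: "x [^] i = inv ?p" using True by (simp only: int_pow_def2 if_True)
    show ?thesis unfolding xi by (rule c)
  next
    case False
    have xi: "x [^] i = x [^] nat i" using False by (simp only: int_pow_def2 if_False)
    show ?thesis unfolding xi by (rule n)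
  qed
qed

lemma (in group) comm_ipow:
  assumes "x \<otimes> y = y \<otimes> x" "x \<in> carrier G" "y \<in> carrier G"
  shows "x [^] (i::int) \<otimes> y [^] (j::int) = y [^] j \<otimes> x [^] i"
proof -
  have "x [^] i \<otimes> y = y \<otimes> x [^] i" by (rule comm_ipow1[OF assms])
  then have "y \<otimes> x [^] i = x [^] i \<otimes> y" by (rule HOL.sym)
  from comm_ipow1[OF this assms(3) int_pow_closed[OF assms(2)]] show ?thesis by (rule HOL.sym)
qed

lemma (in group) two_gen_subgroup:
  assumes c: "a \<otimes> z = z \<otimes> a" and a: "a \<in> carrier G" and z: "z \<in> carrier G"
  shows "subgroup {a [^] (k::int) \<otimes> z [^] (l::int) | k l. True} G"
proof (rule subgroupI)
  show "{a [^] (k::int) \<otimes> z [^] (l::int) | k l. True} \<subseteq> carrier G" using a z by auto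
  show "{a [^] (k::int) \<otimes> z [^] (l::int) | k l. True} \<noteq> {}" by auto
next
  fix p assume "p \<in> {a [^] (k::int) \<otimes> z [^] (l::int) | k l. True}"
  then obtain k l where p: "p = a [^] (k::int) \<otimes> z [^] (l::int)" by auto
  have "inv p = inv (z [^] l) \<otimes> inv (a [^] k)" using p a z by (simp add: inv_mult_group)
  also have "... = z [^] (-l) \<otimes> a [^] (-k)" using a z by (simp add: int_pow_neg)
  also have "... = a [^] (-k) \<otimes> z [^] (-l)" using comm_ipow[OF c a z] by simp
  finally show "inv p \<in> {a [^] (k::int) \<otimes> z [^] (l::int) | k l. True}" by auto
next
  fix p q assume "p \<in> {a [^] (k::int) \<otimes> z [^] (l::int) | k l. True}"
    "q \<in> {a [^] (k::int) \<otimes> z [^] (l::int) | k l. True}"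
  then obtain k l k' l' where p: "p = a [^] (k::int) \<otimes> z [^] (l::int)"
    and q: "q = a [^] (k'::int) \<otimes> z [^] (l'::int)" by auto
  have "p \<otimes> q = a [^] k \<otimes> (z [^] l \<otimes> a [^] k') \<otimes> z [^] l'"
    using p q a z by (simp add: m_assoc)
  also have "... = a [^] k \<otimes> (a [^] k' \<otimes> z [^] l) \<otimes> z [^] l'"
    using comm_ipow[OF c a z] by simp
  also have "... = a [^] (k + k') \<otimes> z [^] (l + l')"
    using a z by (simp add: m_assoc int_pow_mult)
  finally show "p \<otimes> q \<in> {a [^] (k::int) \<otimes> z [^] (l::int) | k l. True}" by auto
qed


theorem lemma5p1:
  fixes m n :: nat and w x :: "letter list set"
  assumes "m \<ge> 2"
    and "primitive_in (artin_group m) (generate (artin_group m) {gen_a m, z_ab m}) x"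
    and "w \<in> carrier (artin_group m)"
    and "w [^]\<^bsub>artin_group m\<^esub> n = x"
  shows "n \<le> m"
proof -
  interpret G: group "artin_group m" by (rule artin_group_group)
  define a where "a = gen_a m"
  define z where "z = z_ab m"
  define H where "H = generate (artin_group m) {a, z}"
  have a: "a \<in> carrier (artin_group m)" by (simp add: a_def gen_a_def artin_group_def)
  have z: "z \<in> carrier (artin_group m)" by (simp add: z_def z_ab_class artin_group_def)
  have c: "a \<otimes>\<^bsub>artin_group m\<^esub> z = z \<otimes>\<^bsub>artin_group m\<^esub> a"
    unfolding a_def z_def by (rule a_z_comm)
  have Hsub: "subgroup H (artin_group m)"
    unfolding H_def using a z by (intro G.generate_is_subgroup) auto
  have aH: "a \<in> H" and zH: "z \<in> H" unfolding H_def by (auto intro: generate.incl)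
  have prim: "x \<in> H" "\<not> (\<exists>y\<in>H. \<exists>k::nat. k \<ge> 2 \<and> x = y [^]\<^bsub>artin_group m\<^esub> k)"
    using assms(2) unfolding primitive_in_def H_def a_def z_def by auto
  have "H \<subseteq> {a [^]\<^bsub>artin_group m\<^esub> (k::int) \<otimes>\<^bsub>artin_group m\<^esub> z [^]\<^bsub>artin_group m\<^esub> (l::int) | k l. True}"
    unfolding H_def
  proof (rule G.generate_subgroup_incl[OF _ G.two_gen_subgroup[OF c a z]])
    have "a = a [^]\<^bsub>artin_group m\<^esub> (1::int) \<otimes>\<^bsub>artin_group m\<^esub> z [^]\<^bsub>artin_group m\<^esub> (0::int)"
      using a z by simp
    moreover have "z = a [^]\<^bsub>artin_group m\<^esub> (0::int) \<otimes>\<^bsub>artin_group m\<^esub> z [^]\<^bsub>artin_group m\<^esub> (1::int)"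
      using a z by simp
    ultimately show "{a, z} \<subseteq> {a [^]\<^bsub>artin_group m\<^esub> (k::int) \<otimes>\<^bsub>artin_group m\<^esub> z [^]\<^bsub>artin_group m\<^esub> (l::int) | k l. True}"
      by blast
  qed
  with prim(1) obtain k l :: int where x: "x = a [^]\<^bsub>artin_group m\<^esub> k \<otimes>\<^bsub>artin_group m\<^esub> z [^]\<^bsub>artin_group m\<^esub> l"
    by auto
  have d1: "gcd k l = 1"
  proof (rule ccontr)
    assume ne: "gcd k l \<noteq> 1"
    show False
    proof (cases "gcd k l = 0")
      case True
      then have "k = 0" "l = 0" by auto
      then have "x = \<one>\<^bsub>artin_group m\<^esub> [^]\<^bsub>artin_group m\<^esub> (2::nat)" using x a z by simp
      moreover have "\<one>\<^bsub>artin_group m\<^esub> \<in> H" using Hsub by (rule subgroup.one_closed)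
      ultimately show False using prim(2) by (metis order_refl)
    next
      case False
      define d where "d = gcd k l"
      have d0: "d \<ge> 0" unfolding d_def by simp
      have d2: "d \<ge> 2" using False ne d0 unfolding d_def by linarith
      define y where "y = a [^]\<^bsub>artin_group m\<^esub> (k div d) \<otimes>\<^bsub>artin_group m\<^esub> z [^]\<^bsub>artin_group m\<^esub> (l div d)"
      have ak: "a [^]\<^bsub>artin_group m\<^esub> (k div d) \<in> H"
        by (rule G.subgroup_int_pow_closed[OF Hsub aH])
      have zl: "z [^]\<^bsub>artin_group m\<^esub> (l div d) \<in> H"
        by (rule G.subgroup_int_pow_closed[OF Hsub zH])
      have yH: "y \<in> H" unfolding y_def by (rule subgroup.m_closed[OF Hsub ak zl])
      have dd: "int (nat d) = d" using d2 by simp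
      have kd: "k div d * d = k" unfolding d_def by simp
      have ld: "l div d * d = l" unfolding d_def by simp
      have ca: "a [^]\<^bsub>artin_group m\<^esub> (k div d) \<in> carrier (artin_group m)" using a by simp
      have cz: "z [^]\<^bsub>artin_group m\<^esub> (l div d) \<in> carrier (artin_group m)" using z by simp
      have cm: "a [^]\<^bsub>artin_group m\<^esub> (k div d) \<otimes>\<^bsub>artin_group m\<^esub> z [^]\<^bsub>artin_group m\<^esub> (l div d)
           = z [^]\<^bsub>artin_group m\<^esub> (l div d) \<otimes>\<^bsub>artin_group m\<^esub> a [^]\<^bsub>artin_group m\<^esub> (k div d)"
        by (rule G.comm_ipow[OF c a z])
      have "y [^]\<^bsub>artin_group m\<^esub> (nat d) = y [^]\<^bsub>artin_group m\<^esub> d"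
        using int_pow_int[of "artin_group m" y "nat d"] unfolding dd by (rule HOL.sym)
      also have "... = (a [^]\<^bsub>artin_group m\<^esub> (k div d)) [^]\<^bsub>artin_group m\<^esub> d \<otimes>\<^bsub>artin_group m\<^esub> (z [^]\<^bsub>artin_group m\<^esub> (l div d)) [^]\<^bsub>artin_group m\<^esub> d"
        unfolding y_def by (rule G.int_pow_mult_distrib[OF cm ca cz])
      also have "... = x"
        unfolding x by (simp only: G.int_pow_pow[OF a] G.int_pow_pow[OF z] kd ld)
      finally have xe: "x = y [^]\<^bsub>artin_group m\<^esub> (nat d)" by (rule HOL.sym)
      have nd: "nat d \<ge> 2" using d2 by simp
      have "\<exists>y\<in>H. \<exists>k::nat. k \<ge> 2 \<and> x = y [^]\<^bsub>artin_group m\<^esub> k"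
        by (rule bexI[OF exI[of _ "nat d"] yH]) (rule conjI[OF nd xe])
      then show False using prim(2) by (rule notE[rotated])
    qed
  qed
  have hA_a: "hom_cnt fA a = 1" "hom_cnt fB a = 0"
    by (simp_all add: a_def gen_a_def hom_cnt_class good_fA good_fB) (simp_all add: cnt_def fA_def fB_def)
  have hA_z: "hom_cnt fA z = int m" "hom_cnt fB z = int m"
    by (simp_all add: z_def z_ab_class hom_cnt_class good_fA good_fB cnt_ab)
  have xA: "hom_cnt fA x = k + l * int m" and xB: "hom_cnt fB x = l * int m"
    using x a z hA_a hA_z
    by (simp_all add: hom_cnt_mult[OF good_fA] hom_cnt_mult[OF good_fB]
        hom_cnt_ipow[OF good_fA] hom_cnt_ipow[OF good_fB])
  have wA: "hom_cnt fA x = int n * hom_cnt fA w" and wB: "hom_cnt fB x = int n * hom_cnt fB w"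
    using assms(3,4) hom_cnt_pow[OF good_fA] hom_cnt_pow[OF good_fB] by auto
  have n1: "int n dvd k + l * int m" using xA wA by (metis dvd_triv_left)
  have n2: "int n dvd l * int m" using xB wB by (metis dvd_triv_left)
  have n3: "int n dvd k" using n1 n2 by (metis dvd_add_left_iff add.commute)
  have "coprime (int n) l"
    using n3 d1 by (metis coprime_iff_gcd_eq_1 coprime_imp_coprime dvd_trans gcd_dvd1 gcd_dvd2)
  then have "int n dvd int m" using n2 by (simp add: coprime_dvd_mult_right_iff)
  then have "n dvd m" by simp
  then show ?thesis using assms(1) by (simp add: dvd_imp_le)
qed

end
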